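(* Let $I$ and $M$ be sets and let $\Phi\colon I\times I\ni(\alpha,\beta)\mapsto\Phi_{\alpha\beta}\in 2^{M\times M}$ be a map (so each $\Phi_{\alpha\beta}$ is a binary relation contained in $M\times M$). Then $\Phi$ satisfies, for all $\alpha,\beta,\gamma\in I$, $$\Phi_{\alpha\beta}\circ\Phi_{\beta\gamma}\subseteq\Phi_{\alpha\gamma},\qquad \Phi_{\alpha\beta}^{-1}\subseteq\Phi_{\beta\alpha},\qquad \Phi_{\alpha\alpha}\subseteq\mathrm{id}_M,$$ if and only if there exists a system $\{\varphi_\alpha\}_{\alpha\in I}$ of binary relations, each of which is an injective co-injection, such that $\Phi_{\alpha\beta}=\varphi_\alpha\circ\varphi_\beta^{-1}$ for all $(\alpha,\beta)\in I\times I$.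
   Context: A binary relation is a set of ordered pairs. For binary relations $\rho,\sigma$: the composition is $\rho\circ\sigma=\{(a,b)\mid \exists c\colon (c,b)\in\rho\ \wedge\ (a,c)\in\sigma\}$; the inverse is $\rho^{-1}=\{(a,b)\mid (b,a)\in\rho\}$; $\mathrm{dom}\,\rho=\{a\mid\exists b\colon (a,b)\in\rho\}$, $\mathrm{rng}\,\rho=\{b\mid \exists a\colon (a,b)\in\rho\}$; $\mathrm{id}_M=\{(x,x)\mid x\in M\}$. A binary relation $\rho$ is called injective (an injection) if $(b_1,a)\in\rho$ and $(b_2,a)\in\rho$ imply $b_1=b_2$; it is called a co-injection if $\rho^{-1}$ is injective, i.e. $(b,a_1)\in\rho$ and $(b,a_2)\in\rho$ imply $a_1=a_2$. An injective co-injection is a relation that is both. *)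

theory Defs
  imports Main
begin

text \<open>Composition in the paper's convention:
  rho o sigma = {(a,b). exists c. (c,b) in rho and (a,c) in sigma}
  (apply sigma first, then rho).\<close>
definition rcomp :: "('b \<times> 'c) set \<Rightarrow> ('a \<times> 'b) set \<Rightarrow> ('a \<times> 'c) set" where
  "rcomp \<rho> \<sigma> = {(a, b). \<exists>c. (c, b) \<in> \<rho> \<and> (a, c) \<in> \<sigma>}"

definition injective_rel :: "('a \<times> 'b) set \<Rightarrow> bool" where
  "injective_rel \<rho> \<longleftrightarrow> (\<forall>b1 b2 a. (b1, a) \<in> \<rho> \<and> (b2, a) \<in> \<rho> \<longrightarrow> b1 = b2)"

definition coinjective_rel :: "('a \<times> 'b) set \<Rightarrow> bool" where
  "coinjective_rel \<rho> \<longleftrightarrow> injective_rel (converse \<rho>)"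

definition inj_coinj :: "('a \<times> 'b) set \<Rightarrow> bool" where
  "inj_coinj \<rho> \<longleftrightarrow> injective_rel \<rho> \<and> coinjective_rel \<rho>"

end

theory Submission
  imports Defs
begin


lemma fwd:
  fixes I :: "'i set" and M :: "'m set" and \<Phi> :: "'i \<Rightarrow> 'i \<Rightarrow> ('m \<times> 'm) set"
  assumes H: "\<forall>\<alpha>\<in>I. \<forall>\<beta>\<in>I. \<forall>\<gamma>\<in>I.
              rcomp (\<Phi> \<alpha> \<beta>) (\<Phi> \<beta> \<gamma>) \<subseteq> \<Phi> \<alpha> \<gamma>
            \<and> converse (\<Phi> \<alpha> \<beta>) \<subseteq> \<Phi> \<beta> \<alpha>
            \<and> \<Phi> \<alpha> \<alpha> \<subseteq> Id_on M"
  shows "\<exists>\<phi> :: 'i \<Rightarrow> (('i \<times> 'm) \<times> 'm) set.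
                 (\<forall>\<alpha>\<in>I. inj_coinj (\<phi> \<alpha>))
               \<and> (\<forall>\<alpha>\<in>I. \<forall>\<beta>\<in>I. \<Phi> \<alpha> \<beta> = rcomp (\<phi> \<alpha>) (converse (\<phi> \<beta>)))"
proof -
  define R where "R = (\<lambda>(p::'i\<times>'m) (q::'i\<times>'m). fst p \<in> I \<and> fst q \<in> I \<and> (snd p, snd q) \<in> \<Phi> (fst q) (fst p))"
  have comp: "(a,b) \<in> \<Phi> \<alpha> \<gamma>" if "\<alpha>\<in>I" "\<beta>\<in>I" "\<gamma>\<in>I" "(a,c) \<in> \<Phi> \<beta> \<gamma>" "(c,b) \<in> \<Phi> \<alpha> \<beta>" for \<alpha> \<beta> \<gamma> a b c
  proof -
    have "rcomp (\<Phi> \<alpha> \<beta>) (\<Phi> \<beta> \<gamma>) \<subseteq> \<Phi> \<alpha> \<gamma>" using H that(1-3) by simp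
    moreover have "(a,b) \<in> rcomp (\<Phi> \<alpha> \<beta>) (\<Phi> \<beta> \<gamma>)" unfolding rcomp_def using that(4,5) by blast
    ultimately show ?thesis by (rule subsetD)
  qed
  have conv: "(b,a) \<in> \<Phi> \<beta> \<alpha>" if "\<alpha>\<in>I" "\<beta>\<in>I" "(a,b) \<in> \<Phi> \<alpha> \<beta>" for \<alpha> \<beta> a b
  proof -
    have "converse (\<Phi> \<alpha> \<beta>) \<subseteq> \<Phi> \<beta> \<alpha>" using H that(1,2) by simp
    then show ?thesis using that(3) by auto
  qed
  have idd: "a = b" if "\<alpha>\<in>I" "(a,b) \<in> \<Phi> \<alpha> \<alpha>" for \<alpha> a b
  proof -
    have "\<Phi> \<alpha> \<alpha> \<subseteq> Id_on M" using H that(1) by simp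
    then show ?thesis using that(2) by auto
  qed
  have Rsym: "R q p" if "R p q" for p q
  proof -
    obtain \<gamma> m \<delta> n where pq: "p = (\<gamma>,m)" "q = (\<delta>,n)" by force
    have h: "\<gamma> \<in> I" "\<delta> \<in> I" "(m,n) \<in> \<Phi> \<delta> \<gamma>" using that pq unfolding R_def by simp_all
    have "(n,m) \<in> \<Phi> \<gamma> \<delta>" by (rule conv[OF h(2,1,3)])
    then show ?thesis using h pq unfolding R_def by simp
  qed
  have Rtrans: "R p r" if "R p q" "R q r" for p q r
  proof -
    obtain \<gamma> m \<delta> n \<epsilon> k where pq: "p = (\<gamma>,m)" "q = (\<delta>,n)" "r = (\<epsilon>,k)" by force
    have h: "\<gamma> \<in> I" "\<delta> \<in> I" "\<epsilon> \<in> I" "(m,n) \<in> \<Phi> \<delta> \<gamma>" "(n,k) \<in> \<Phi> \<epsilon> \<delta>"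
      using that pq unfolding R_def by simp_all
    have "(m,k) \<in> \<Phi> \<epsilon> \<gamma>" by (rule comp[OF h(3,2,1,4,5)])
    then show ?thesis using h pq unfolding R_def by simp
  qed
  have Rrefl: "R p p" if "R p q" for p q
    using Rtrans[OF that Rsym[OF that]] .
  define rep where "rep = (\<lambda>p. SOME q. R p q)"
  have rep_in: "R p (rep p)" if "R p q" for p q
    unfolding rep_def using that by (rule someI)
  have rep_eq: "rep p = rep q" if "R p q" for p q
  proof -
    have "(\<lambda>r. R p r) = (\<lambda>r. R q r)"
    proof (rule ext, rule iffI)
      fix r assume "R p r" then show "R q r" using Rtrans[OF Rsym[OF that]] by blast
    next
      fix r assume "R q r" then show "R p r" using Rtrans[OF that] by blast
    qed
    then show ?thesis unfolding rep_def by simp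
  qed
  define \<phi> where "\<phi> = (\<lambda>\<alpha>. {(x, n). rep x = x \<and> R x (\<alpha>, n)})"
  have "\<forall>\<alpha>\<in>I. inj_coinj (\<phi> \<alpha>)"
  proof
    fix \<alpha> assume a: "\<alpha> \<in> I"
    have "injective_rel (\<phi> \<alpha>)"
      unfolding injective_rel_def \<phi>_def
    proof (intro allI impI)
      fix n x1 x2 assume hh: "(x1, n) \<in> {(x, n). rep x = x \<and> R x (\<alpha>, n)} \<and> (x2, n) \<in> {(x, n). rep x = x \<and> R x (\<alpha>, n)}"
      then have h: "rep x1 = x1" "R x1 (\<alpha>, n)" "rep x2 = x2" "R x2 (\<alpha>, n)" by auto
      have "R x1 x2" using Rtrans[OF h(2) Rsym[OF h(4)]] .
      then have "rep x1 = rep x2" by (rule rep_eq)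
      then show "x1 = x2" using h by simp
    qed
    moreover have "coinjective_rel (\<phi> \<alpha>)"
      unfolding coinjective_rel_def injective_rel_def \<phi>_def
    proof (intro allI impI)
      fix n1 n2 x assume "(n1, x) \<in> converse {(x, n). rep x = x \<and> R x (\<alpha>, n)} \<and> (n2, x) \<in> converse {(x, n). rep x = x \<and> R x (\<alpha>, n)}"
      then have "R x (\<alpha>, n1)" "R x (\<alpha>, n2)" by auto
      then have "R (\<alpha>, n1) (\<alpha>, n2)" using Rsym Rtrans by blast
      then show "n1 = n2" unfolding R_def using idd conv by auto
    qed
    ultimately show "inj_coinj (\<phi> \<alpha>)" unfolding inj_coinj_def by simp
  qed
  moreover have "\<forall>\<alpha>\<in>I. \<forall>\<beta>\<in>I. \<Phi> \<alpha> \<beta> = rcomp (\<phi> \<alpha>) (converse (\<phi> \<beta>))"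
  proof (intro ballI set_eqI iffI)
    fix \<alpha> \<beta> z assume ab: "\<alpha> \<in> I" "\<beta> \<in> I" and z: "z \<in> \<Phi> \<alpha> \<beta>"
    obtain a b where zab: "z = (a,b)" by force
    have r: "R (\<beta>,a) (\<alpha>,b)" unfolding R_def using ab z zab by auto
    define x where "x = rep (\<beta>,a)"
    have "R (\<beta>,a) (\<beta>,a)" using Rrefl r by blast
    then have "R (\<beta>,a) x" unfolding x_def by (rule rep_in)
    then have rx: "rep x = x" using rep_eq x_def by metis
    have "R x (\<beta>,a)" using \<open>R (\<beta>,a) x\<close> Rsym by blast
    moreover have "R x (\<alpha>,b)" using calculation r Rtrans by blast
    ultimately show "z \<in> rcomp (\<phi> \<alpha>) (converse (\<phi> \<beta>))"
      unfolding rcomp_def \<phi>_def zab using rx by (simp only: mem_Collect_eq case_prod_conv converse_iff) (rule exI[of _ x], simp)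
  next
    fix \<alpha> \<beta> z assume ab: "\<alpha> \<in> I" "\<beta> \<in> I" and z: "z \<in> rcomp (\<phi> \<alpha>) (converse (\<phi> \<beta>))"
    then obtain a b x where zab: "z = (a,b)" "R x (\<alpha>,b)" "R x (\<beta>,a)"
      unfolding rcomp_def \<phi>_def by auto
    then have "R (\<beta>,a) (\<alpha>,b)" using Rsym Rtrans by blast
    then show "z \<in> \<Phi> \<alpha> \<beta>" unfolding R_def zab by auto
  qed
  ultimately show ?thesis by blast
qed

theorem theorem1:
  fixes I :: "'i set" and M :: "'m set" and \<Phi> :: "'i \<Rightarrow> 'i \<Rightarrow> ('m \<times> 'm) set"
  assumes "\<forall>\<alpha>\<in>I. \<forall>\<beta>\<in>I. \<Phi> \<alpha> \<beta> \<subseteq> M \<times> M"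
  shows "((\<forall>\<alpha>\<in>I. \<forall>\<beta>\<in>I. \<forall>\<gamma>\<in>I.
              rcomp (\<Phi> \<alpha> \<beta>) (\<Phi> \<beta> \<gamma>) \<subseteq> \<Phi> \<alpha> \<gamma>
            \<and> converse (\<Phi> \<alpha> \<beta>) \<subseteq> \<Phi> \<beta> \<alpha>
            \<and> \<Phi> \<alpha> \<alpha> \<subseteq> Id_on M)
          \<longrightarrow> (\<exists>\<phi> :: 'i \<Rightarrow> (('i \<times> 'm) \<times> 'm) set.
                 (\<forall>\<alpha>\<in>I. inj_coinj (\<phi> \<alpha>))
               \<and> (\<forall>\<alpha>\<in>I. \<forall>\<beta>\<in>I. \<Phi> \<alpha> \<beta> = rcomp (\<phi> \<alpha>) (converse (\<phi> \<beta>)))))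
       \<and> (\<forall>\<phi> :: 'i \<Rightarrow> ('x \<times> 'm) set.
              ((\<forall>\<alpha>\<in>I. inj_coinj (\<phi> \<alpha>))
               \<and> (\<forall>\<alpha>\<in>I. \<forall>\<beta>\<in>I. \<Phi> \<alpha> \<beta> = rcomp (\<phi> \<alpha>) (converse (\<phi> \<beta>))))
            \<longrightarrow> (\<forall>\<alpha>\<in>I. \<forall>\<beta>\<in>I. \<forall>\<gamma>\<in>I.
                   rcomp (\<Phi> \<alpha> \<beta>) (\<Phi> \<beta> \<gamma>) \<subseteq> \<Phi> \<alpha> \<gamma>
                 \<and> converse (\<Phi> \<alpha> \<beta>) \<subseteq> \<Phi> \<beta> \<alpha>
                 \<and> \<Phi> \<alpha> \<alpha> \<subseteq> Id_on M))"
  proof (intro conjI impI allI)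
  show "\<exists>\<phi> :: 'i \<Rightarrow> (('i \<times> 'm) \<times> 'm) set.
                 (\<forall>\<alpha>\<in>I. inj_coinj (\<phi> \<alpha>))
               \<and> (\<forall>\<alpha>\<in>I. \<forall>\<beta>\<in>I. \<Phi> \<alpha> \<beta> = rcomp (\<phi> \<alpha>) (converse (\<phi> \<beta>)))"
    if "\<forall>\<alpha>\<in>I. \<forall>\<beta>\<in>I. \<forall>\<gamma>\<in>I.
              rcomp (\<Phi> \<alpha> \<beta>) (\<Phi> \<beta> \<gamma>) \<subseteq> \<Phi> \<alpha> \<gamma>
            \<and> converse (\<Phi> \<alpha> \<beta>) \<subseteq> \<Phi> \<beta> \<alpha>
            \<and> \<Phi> \<alpha> \<alpha> \<subseteq> Id_on M"
    using fwd[OF that] by blast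
next
  fix \<phi> :: "'i \<Rightarrow> ('x \<times> 'm) set"
  assume A: "(\<forall>\<alpha>\<in>I. inj_coinj (\<phi> \<alpha>))
               \<and> (\<forall>\<alpha>\<in>I. \<forall>\<beta>\<in>I. \<Phi> \<alpha> \<beta> = rcomp (\<phi> \<alpha>) (converse (\<phi> \<beta>)))"
  have inj: "x1 = x2" if "\<alpha>\<in>I" "(x1,n) \<in> \<phi> \<alpha>" "(x2,n) \<in> \<phi> \<alpha>" for \<alpha> x1 x2 n
    using A that unfolding inj_coinj_def injective_rel_def by blast
  have coinj: "n1 = n2" if "\<alpha>\<in>I" "(x,n1) \<in> \<phi> \<alpha>" "(x,n2) \<in> \<phi> \<alpha>" for \<alpha> x n1 n2
    using A that unfolding inj_coinj_def coinjective_rel_def injective_rel_def by blast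
  have mem: "(a,b) \<in> \<Phi> \<alpha> \<beta> \<longleftrightarrow> (\<exists>x. (x,b) \<in> \<phi> \<alpha> \<and> (x,a) \<in> \<phi> \<beta>)" if "\<alpha>\<in>I" "\<beta>\<in>I" for \<alpha> \<beta> a b
    using A that unfolding rcomp_def by auto
  show "\<forall>\<alpha>\<in>I. \<forall>\<beta>\<in>I. \<forall>\<gamma>\<in>I.
                   rcomp (\<Phi> \<alpha> \<beta>) (\<Phi> \<beta> \<gamma>) \<subseteq> \<Phi> \<alpha> \<gamma>
                 \<and> converse (\<Phi> \<alpha> \<beta>) \<subseteq> \<Phi> \<beta> \<alpha>
                 \<and> \<Phi> \<alpha> \<alpha> \<subseteq> Id_on M"
  proof (intro ballI conjI subsetI)
    fix \<alpha> \<beta> \<gamma> z assume I: "\<alpha>\<in>I" "\<beta>\<in>I" "\<gamma>\<in>I" and z: "z \<in> rcomp (\<Phi> \<alpha> \<beta>) (\<Phi> \<beta> \<gamma>)"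
    then obtain a b c where zz: "z = (a,b)" "(c,b) \<in> \<Phi> \<alpha> \<beta>" "(a,c) \<in> \<Phi> \<beta> \<gamma>"
      unfolding rcomp_def by auto
    obtain x where x: "(x,c) \<in> \<phi> \<beta>" "(x,a) \<in> \<phi> \<gamma>" using mem[OF I(2,3)] zz(3) by blast
    obtain y where y: "(y,b) \<in> \<phi> \<alpha>" "(y,c) \<in> \<phi> \<beta>" using mem[OF I(1,2)] zz(2) by blast
    have "x = y" using inj[OF I(2) x(1) y(2)] .
    then have "\<exists>x. (x,b) \<in> \<phi> \<alpha> \<and> (x,a) \<in> \<phi> \<gamma>" using x y by blast
    then show "z \<in> \<Phi> \<alpha> \<gamma>" using mem[OF I(1,3)] zz(1) by simp
  next
    fix \<alpha> \<beta> \<gamma> z assume I: "\<alpha>\<in>I" "\<beta>\<in>I" "\<gamma>\<in>I" and z: "z \<in> converse (\<Phi> \<alpha> \<beta>)"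
    obtain a b where zz: "z = (b,a)" by force
    have "(a,b) \<in> \<Phi> \<alpha> \<beta>" using z zz by simp
    then obtain x where "(x,b) \<in> \<phi> \<alpha>" "(x,a) \<in> \<phi> \<beta>" using mem[OF I(1,2)] by blast
    then have "\<exists>x. (x,a) \<in> \<phi> \<beta> \<and> (x,b) \<in> \<phi> \<alpha>" by blast
    then show "z \<in> \<Phi> \<beta> \<alpha>" using mem[OF I(2,1)] zz by simp
  next
    fix \<alpha> \<beta> \<gamma> z assume I: "\<alpha>\<in>I" "\<beta>\<in>I" "\<gamma>\<in>I" and z: "z \<in> \<Phi> \<alpha> \<alpha>"
    obtain a b where zz: "z = (a,b)" by force
    obtain x where "(x,b) \<in> \<phi> \<alpha>" "(x,a) \<in> \<phi> \<alpha>" using mem[OF I(1,1)] z zz by blast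
    then have "a = b" using coinj[OF I(1)] by blast
    moreover have "\<Phi> \<alpha> \<alpha> \<subseteq> M \<times> M" using assms I(1) by simp
    then have "a \<in> M" using z zz by blast
    ultimately show "z \<in> Id_on M" using zz by auto
  qed
qed

end
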